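(* Let $k_1^*,\dots,k_F^*\in\mathbb R^D$ be orthonormal, $(k_f^* )^\top k_{f'}^*=\delta_{f,f'}$, and let $P_\theta$ be a distribution on $\mathbb R^F$ with finite support $\{\theta^1,\dots,\theta^H\}$. Generate $(X,y)$ by $\epsilon\sim\mathrm{Unif}([L])$, $\theta\sim P_\theta$, $X_\ell\sim\mathcal N(\delta_{\ell,\epsilon}\hat k(\theta),I_D)$ independently, $y=X_\epsilon$, where $\hat k(\theta)=\sum_f\theta_fk_f^*$. Consider the Bayes-softmax attention with $H$ heads, $$\hat y_{k,b}(X)=\sum_{\ell=1}^L\frac{\sum_{h=1}^H\exp(k_h^\top X_\ell+b_h)}{\sum_{\ell'=1}^L\sum_{h'=1}^H\exp(k_{h'}^\top X_{\ell'}+b_{h'})}X_\ell,$$ with parameters $k_h=\hat k(\theta^h)$ and $b_h=-\|\theta^h\|_2^2/2+\log P_\theta(\theta^h)$. Then this estimator achieves the Bayes risk, i.e. its mean squared error $\mathbb E\|y-\hat y_{k,b}(X)\|_2^2$ equals that of the Bayes-optimal estimator $\mathbb E[y\mid X,k^*]$.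
   Context: Fix integers $L,F,D,H\ge1$; $[L]=\{1,\dots,L\}$, $\delta$ is the Kronecker delta. *)

theory Defs
  imports "HOL-Probability.Probability"
begin

text \<open>Vectors in R^n are represented as functions nat => real, indexed by {1..n}.
  An observation X in (R^D)^L is a function nat => nat => real, X l d for
  l in {1..L}, d in {1..D}.\<close>

definition khat :: "nat \<Rightarrow> (nat \<Rightarrow> nat \<Rightarrow> real) \<Rightarrow> (nat \<Rightarrow> real) \<Rightarrow> (nat \<Rightarrow> real)" where
  "khat F kstar th = (\<lambda>d. \<Sum>f=1..F. th f * kstar f d)"

definition sqnorm :: "nat \<Rightarrow> (nat \<Rightarrow> real) \<Rightarrow> real" where
  "sqnorm n v = (\<Sum>i=1..n. (v i)\<^sup>2)"

definition dotp :: "nat \<Rightarrow> (nat \<Rightarrow> real) \<Rightarrow> (nat \<Rightarrow> real) \<Rightarrow> real" where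
  "dotp n u v = (\<Sum>i=1..n. u i * v i)"

definition obs_space :: "nat \<Rightarrow> nat \<Rightarrow> (nat \<Rightarrow> nat \<Rightarrow> real) measure" where
  "obs_space L D = PiM {1..L} (\<lambda>_. PiM {1..D} (\<lambda>_. (borel :: real measure)))"

definition obs_law :: "nat \<Rightarrow> nat \<Rightarrow> nat \<Rightarrow> (nat \<Rightarrow> nat \<Rightarrow> real) \<Rightarrow> nat \<Rightarrow> (nat \<Rightarrow> real)
    \<Rightarrow> (nat \<Rightarrow> nat \<Rightarrow> real) measure" where
  "obs_law L F D kstar e th =
     PiM {1..L} (\<lambda>l. PiM {1..D} (\<lambda>d.
        density lborel (normal_density (if l = e then khat F kstar th d else 0) 1)))"

text \<open>Joint law of (epsilon, X): epsilon ~ Unif([L]), theta ~ P independent,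
  X | (epsilon, theta) ~ obs_law.  (theta is marginalised out; y = X_epsilon.)\<close>
definition data_model :: "nat \<Rightarrow> nat \<Rightarrow> nat \<Rightarrow> (nat \<Rightarrow> nat \<Rightarrow> real) \<Rightarrow> (nat \<Rightarrow> real) pmf
    \<Rightarrow> (nat \<times> (nat \<Rightarrow> nat \<Rightarrow> real)) measure" where
  "data_model L F D kstar P =
     measure_pmf (pair_pmf (pmf_of_set {1..L}) P) \<bind>
       (\<lambda>(e, th). distr (obs_law L F D kstar e th)
                        (count_space UNIV \<Otimes>\<^sub>M obs_space L D) (\<lambda>X. (e, X)))"

definition sigma_X :: "nat \<Rightarrow> nat \<Rightarrow> (nat \<times> (nat \<Rightarrow> nat \<Rightarrow> real)) measure
    \<Rightarrow> (nat \<times> (nat \<Rightarrow> nat \<Rightarrow> real)) measure" where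
  "sigma_X L D M = vimage_algebra (space M) snd (obs_space L D)"

definition bayes_softmax :: "nat \<Rightarrow> nat \<Rightarrow> nat \<Rightarrow> (nat \<Rightarrow> nat \<Rightarrow> real) \<Rightarrow> (nat \<Rightarrow> real)
    \<Rightarrow> (nat \<Rightarrow> nat \<Rightarrow> real) \<Rightarrow> (nat \<Rightarrow> real)" where
  "bayes_softmax L D H kk b X =
     (\<lambda>d. \<Sum>l=1..L.
        ((\<Sum>h=1..H. exp (dotp D (kk h) (X l) + b h)) /
         (\<Sum>l'=1..L. \<Sum>h'=1..H. exp (dotp D (kk h') (X l') + b h'))) * X l d)"

end

theory Submission
  imports Defs
begin

lemma bind_pmf_finite_integral:
  fixes p :: "'a pmf" and K :: "'a \<Rightarrow> 'b measure" and g :: "'b \<Rightarrow> real"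
  assumes fin: "finite (set_pmf p)"
    and K: "\<And>x. K x \<in> space (prob_algebra N)"
    and g[measurable]: "g \<in> borel_measurable N"
    and int: "\<And>x. x \<in> set_pmf p \<Longrightarrow> integrable (K x) g"
  shows "integrable (measure_pmf p \<bind> K) g"
    and "(\<integral>\<omega>. g \<omega> \<partial>(measure_pmf p \<bind> K)) = (\<Sum>x\<in>set_pmf p. pmf p x * (\<integral>\<omega>. g \<omega> \<partial>K x))"
proof -
  have Km: "K \<in> measure_pmf p \<rightarrow>\<^sub>M subprob_algebra N"
    using K by (auto simp: space_prob_algebra space_subprob_algebra prob_space_imp_subprob_space)
  have sK: "sets (K x) = sets N" for x using K[of x] by (auto simp: space_prob_algebra)
  have gK[measurable]: "g \<in> borel_measurable (K x)" for x
    using sK[of x] by (simp cong: measurable_cong_sets)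
  have nnb: "(\<integral>\<^sup>+\<omega>. f \<omega> \<partial>(measure_pmf p \<bind> K)) = (\<Sum>x\<in>set_pmf p. (\<integral>\<^sup>+\<omega>. f \<omega> \<partial>K x) * pmf p x)"
    if [measurable]: "f \<in> borel_measurable N" for f :: "'b \<Rightarrow> ennreal"
    by (subst nn_integral_bind[OF _ Km]) (auto intro!: nn_integral_measure_pmf_finite fin)
  have fin1: "(\<integral>\<^sup>+\<omega>. ennreal (norm (g \<omega>)) \<partial>K x) < \<infinity>" if "x \<in> set_pmf p" for x
    using int[OF that] by (simp add: integrable_iff_bounded)
  have fin2: "(\<integral>\<^sup>+\<omega>. ennreal (f \<omega>) \<partial>K x) < \<infinity>" if "x \<in> set_pmf p" "\<And>\<omega>. f \<omega> \<le> norm (g \<omega>)"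
     "f \<in> borel_measurable N" for x f
  proof -
    have "(\<integral>\<^sup>+\<omega>. ennreal (f \<omega>) \<partial>K x) \<le> (\<integral>\<^sup>+\<omega>. ennreal (norm (g \<omega>)) \<partial>K x)"
      by (intro nn_integral_mono) (use that in \<open>auto intro: ennreal_leI\<close>)
    then show ?thesis using fin1[OF that(1)] by (simp add: le_less_trans)
  qed
  show I: "integrable (measure_pmf p \<bind> K) g"
  proof (rule integrableI_bounded)
    show "g \<in> borel_measurable (measure_pmf p \<bind> K)"
      by (subst measurable_cong_sets[OF sets_bind[OF sK] refl]) auto
    show "(\<integral>\<^sup>+\<omega>. ennreal (norm (g \<omega>)) \<partial>(measure_pmf p \<bind> K)) < \<infinity>"
      by (subst nnb) (auto simp: fin1[simplified] ennreal_mult_less_top fin)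
  qed
  have e: "enn2real (\<integral>\<^sup>+\<omega>. ennreal (f \<omega>) \<partial>(measure_pmf p \<bind> K)) =
      (\<Sum>x\<in>set_pmf p. pmf p x * enn2real (\<integral>\<^sup>+\<omega>. ennreal (f \<omega>) \<partial>K x))"
    if [measurable]: "f \<in> borel_measurable N" "\<And>\<omega>. f \<omega> \<le> norm (g \<omega>)" for f
  proof -
    have ft: "(\<integral>\<^sup>+\<omega>. ennreal (f \<omega>) \<partial>K x) < top" if "x \<in> set_pmf p" for x
      using fin2[OF that] \<open>\<And>\<omega>. f \<omega> \<le> norm (g \<omega>)\<close> \<open>f \<in> borel_measurable N\<close> by simp
    show ?thesis
    apply (subst nnb, simp)
    apply (subst enn2real_sum)
     apply (auto simp: ennreal_mult_less_top ft enn2real_mult intro!: sum.cong)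
    done
  qed
  have "(\<integral>\<omega>. g \<omega> \<partial>(measure_pmf p \<bind> K)) =
      enn2real (\<integral>\<^sup>+\<omega>. ennreal (g \<omega>) \<partial>(measure_pmf p \<bind> K)) - enn2real (\<integral>\<^sup>+\<omega>. ennreal (- g \<omega>) \<partial>(measure_pmf p \<bind> K))"
    by (rule real_lebesgue_integral_def[OF I])
  also have "\<dots> = (\<Sum>x\<in>set_pmf p. pmf p x * (enn2real (\<integral>\<^sup>+\<omega>. ennreal (g \<omega>) \<partial>K x) - enn2real (\<integral>\<^sup>+\<omega>. ennreal (- g \<omega>) \<partial>K x)))"
    by (subst e, simp, simp, subst e, simp, simp) (simp add: sum_subtractf right_diff_distrib)
  also have "\<dots> = (\<Sum>x\<in>set_pmf p. pmf p x * (\<integral>\<omega>. g \<omega> \<partial>K x))"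
    by (intro sum.cong refl arg_cong2[where f="(*)"] real_lebesgue_integral_def[symmetric] int)
  finally show "(\<integral>\<omega>. g \<omega> \<partial>(measure_pmf p \<bind> K)) = (\<Sum>x\<in>set_pmf p. pmf p x * (\<integral>\<omega>. g \<omega> \<partial>K x))" .
qed

lemma PiM_density:
  fixes N :: "'i \<Rightarrow> 'a measure" and f :: "'i \<Rightarrow> 'a \<Rightarrow> real"
  assumes I: "finite I"
    and N: "\<And>i. sigma_finite_measure (N i)"
    and fm[measurable]: "\<And>i. i \<in> I \<Longrightarrow> f i \<in> borel_measurable (N i)"
    and nn: "\<And>i x. 0 \<le> f i x"
    and P: "\<And>i. prob_space (density (N i) (f i))"
  shows "PiM I (\<lambda>i. density (N i) (f i)) = density (PiM I N) (\<lambda>x. \<Prod>i\<in>I. f i (x i))"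
proof -
  interpret D: product_sigma_finite "\<lambda>i. density (N i) (f i)"
    unfolding product_sigma_finite_def using P by (auto intro: prob_space_imp_sigma_finite)
  interpret Ns: product_sigma_finite N
    unfolding product_sigma_finite_def using N by auto
  have Fm: "(\<lambda>x. \<Prod>i\<in>I. f i (x i)) \<in> borel_measurable (PiM I N)"
    by measurable
  show ?thesis
  proof (rule D.PiM_eqI[symmetric, OF I])
    show "sets (density (PiM I N) (\<lambda>x. \<Prod>i\<in>I. f i (x i))) = sets (PiM I (\<lambda>i. density (N i) (f i)))"
      unfolding sets_density by (intro sets_PiM_cong refl) simp
  next
    fix A assume A: "\<And>i. i \<in> I \<Longrightarrow> A i \<in> sets (density (N i) (f i))"
    then have A': "\<And>i. i \<in> I \<Longrightarrow> A i \<in> sets (N i)" by simp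
    have "emeasure (density (PiM I N) (\<lambda>x. \<Prod>i\<in>I. f i (x i))) (Pi\<^sub>E I A) =
        (\<integral>\<^sup>+x. ennreal (\<Prod>i\<in>I. f i (x i)) * indicator (Pi\<^sub>E I A) x \<partial>PiM I N)"
      using A' I by (intro emeasure_density Fm) (auto intro: sets_PiM_I_finite)
    also have "\<dots> = (\<integral>\<^sup>+x. (\<Prod>i\<in>I. ennreal (f i (x i)) * indicator (A i) (x i)) \<partial>PiM I N)"
    proof (intro nn_integral_cong)
      fix x assume x: "x \<in> space (PiM I N)"
      then have "x \<in> extensional I" by (auto simp: space_PiM PiE_iff)
      then have ir: "indicator (Pi\<^sub>E I A) x = (\<Prod>i\<in>I. indicator (A i) (x i) :: real)"
        using I by (auto simp: indicator_def PiE_def Pi_iff intro!: prod.neutral)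
      have "ennreal (\<Prod>i\<in>I. f i (x i)) * indicator (Pi\<^sub>E I A) x = ennreal (\<Prod>i\<in>I. f i (x i)) * ennreal (\<Prod>i\<in>I. indicator (A i) (x i))"
        by (simp only: ir flip: ennreal_indicator)
      also have "\<dots> = ennreal ((\<Prod>i\<in>I. f i (x i)) * (\<Prod>i\<in>I. indicator (A i) (x i)))"
        by (rule ennreal_mult[symmetric]) (auto simp: nn prod_nonneg)
      also have "\<dots> = ennreal (\<Prod>i\<in>I. f i (x i) * indicator (A i) (x i))"
        by (simp only: prod.distrib)
      also have "\<dots> = (\<Prod>i\<in>I. ennreal (f i (x i) * indicator (A i) (x i)))"
        by (rule prod_ennreal[symmetric]) (simp add: nn)
      also have "\<dots> = (\<Prod>i\<in>I. ennreal (f i (x i)) * indicator (A i) (x i))"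
        by (intro prod.cong refl) (simp add: ennreal_mult nn flip: ennreal_indicator)
      finally show "ennreal (\<Prod>i\<in>I. f i (x i)) * indicator (Pi\<^sub>E I A) x = (\<Prod>i\<in>I. ennreal (f i (x i)) * indicator (A i) (x i))" .
    qed
    also have "\<dots> = (\<Prod>i\<in>I. \<integral>\<^sup>+y. ennreal (f i y) * indicator (A i) y \<partial>N i)"
      using A' by (intro Ns.product_nn_integral_prod I) auto
    also have "\<dots> = (\<Prod>i\<in>I. emeasure (density (N i) (f i)) (A i))"
      using A' by (intro prod.cong refl emeasure_density[symmetric]) auto
    finally show "emeasure (density (PiM I N) (\<lambda>x. \<Prod>i\<in>I. f i (x i))) (Pi\<^sub>E I A) = (\<Prod>i\<in>I. emeasure (density (N i) (f i)) (A i))" .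
  qed
qed

definition gauss :: "nat \<Rightarrow> nat \<Rightarrow> (nat \<Rightarrow> nat \<Rightarrow> real) \<Rightarrow> (nat \<Rightarrow> nat \<Rightarrow> real) measure" where
  "gauss L D \<mu> = PiM {1..L} (\<lambda>l. PiM {1..D} (\<lambda>d. density lborel (normal_density (\<mu> l d) 1)))"

definition Lam :: "nat \<Rightarrow> nat \<Rightarrow> (nat \<Rightarrow> nat \<Rightarrow> real) measure" where
  "Lam L D = PiM {1..L} (\<lambda>_. PiM {1..D} (\<lambda>_. lborel))"

definition psi :: "nat \<Rightarrow> nat \<Rightarrow> (nat \<Rightarrow> nat \<Rightarrow> real) \<Rightarrow> (nat \<Rightarrow> nat \<Rightarrow> real) \<Rightarrow> real" where
  "psi L D \<mu> X = (\<Prod>l\<in>{1..L}. \<Prod>d\<in>{1..D}. normal_density (\<mu> l d) 1 (X l d))"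

lemma sf_PiM_lborel: "finite I \<Longrightarrow> sigma_finite_measure (PiM I (\<lambda>_::nat. lborel :: real measure))"
proof -
  assume "finite I"
  interpret product_sigma_finite "\<lambda>_::nat. lborel :: real measure"
    unfolding product_sigma_finite_def by (simp add: lborel.sigma_finite_measure_axioms)
  show ?thesis by (rule product_sigma_finite.sigma_finite[OF product_sigma_finite_axioms \<open>finite I\<close>])
qed

lemma inner_density:
  "PiM {1..(D::nat)} (\<lambda>d. density lborel (normal_density (m d) 1)) =
   density (PiM {1..D} (\<lambda>_. lborel)) (\<lambda>x. \<Prod>d\<in>{1..D}. normal_density (m d) 1 (x d))"
  by (rule PiM_density) (auto simp: lborel.sigma_finite_measure_axioms intro!: prob_space_normal_density)

lemma gauss_density: "gauss L D \<mu> = density (Lam L D) (psi L D \<mu>)"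
proof -
  have "gauss L D \<mu> = PiM {1..L} (\<lambda>l. density (PiM {1..D} (\<lambda>_. lborel)) (\<lambda>x. \<Prod>d\<in>{1..D}. normal_density (\<mu> l d) 1 (x d)))"
    unfolding gauss_def by (simp only: inner_density)
  also have "\<dots> = density (Lam L D) (\<lambda>X. \<Prod>l\<in>{1..L}. \<Prod>d\<in>{1..D}. normal_density (\<mu> l d) 1 (X l d))"
    unfolding Lam_def
  proof (rule PiM_density)
    fix l
    show "prob_space (density (PiM {1..D} (\<lambda>_. lborel)) (\<lambda>x. \<Prod>d\<in>{1..D}. normal_density (\<mu> l d) 1 (x d)))"
      by (simp only: inner_density[symmetric]) (intro prob_space_PiM prob_space_normal_density; simp)
  qed (auto simp: sf_PiM_lborel prod_nonneg)
  finally show ?thesis unfolding psi_def .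
qed

lemma prob_space_gauss: "prob_space (gauss L D \<mu>)"
  unfolding gauss_def by (intro prob_space_PiM prob_space_normal_density; simp)

lemma sets_gauss: "sets (gauss L D \<mu>) = sets (obs_space L D)"
  unfolding gauss_def obs_space_def by (intro sets_PiM_cong refl) auto

lemma sets_Lam: "sets (Lam L D) = sets (obs_space L D)"
  unfolding Lam_def obs_space_def by (intro sets_PiM_cong refl) auto

lemma integrable_gauss_coord:
  assumes l: "l \<in> {1..L}" and d: "d \<in> {1..D}"
  shows "integrable (gauss L D \<mu>) (\<lambda>X. X l d)"
proof -
  let ?N = "\<lambda>l. PiM {1..D} (\<lambda>d. density lborel (normal_density (\<mu> l d) 1))"
  have ps: "prob_space (?N l)" for l by (intro prob_space_PiM prob_space_normal_density; simp)
  have d1: "distr (gauss L D \<mu>) (?N l) (\<lambda>X. X l) = ?N l"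
    unfolding gauss_def by (rule distr_PiM_component[OF ps l])
  have d2: "distr (?N l) (density lborel (normal_density (\<mu> l d) 1)) (\<lambda>x. x d) = density lborel (normal_density (\<mu> l d) 1)"
    by (rule distr_PiM_component[OF prob_space_normal_density d]; simp)
  have "integrable (density lborel (normal_density (\<mu> l d) 1)) (\<lambda>x. x)"
    by (subst integrable_density) (auto simp: integrable_normal_moment_nz_1)
  have m1: "(\<lambda>x. x d) \<in> ?N l \<rightarrow>\<^sub>M density lborel (normal_density (\<mu> l d) 1)"
    by (rule measurable_component_singleton[OF d])
  have m2: "(\<lambda>X. X l) \<in> gauss L D \<mu> \<rightarrow>\<^sub>M ?N l"
    unfolding gauss_def by (rule measurable_component_singleton[OF l])
  have m1': "(\<lambda>x. x d) \<in> borel_measurable (?N l)"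
    using m1 unfolding measurable_def by simp
  from \<open>integrable (density lborel (normal_density (\<mu> l d) 1)) (\<lambda>x. x)\<close>
  have "integrable (?N l) (\<lambda>x. x d)"
    by (subst (asm) d2[symmetric]) (subst (asm) integrable_distr_eq[OF m1]; simp add: m1')
  then have "integrable (distr (gauss L D \<mu>) (?N l) (\<lambda>X. X l)) (\<lambda>x. x d)"
    by (simp only: d1)
  then show ?thesis
    using integrable_distr_eq[OF m2 m1'] by simp
qed

lemma nd_shift: "normal_density m 1 x = normal_density 0 1 x * exp (m * x - m\<^sup>2 / 2)"
proof -
  have "exp (-(x - m)\<^sup>2 / (2 * 1\<^sup>2)) = exp (-(x - 0)\<^sup>2 / (2 * 1\<^sup>2)) * exp (m * x - m\<^sup>2 / 2)"
    by (subst mult_exp_exp) (simp add: power2_eq_square field_simps)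
  then show ?thesis unfolding normal_density_def by simp
qed

lemma psi_shift:
  assumes e: "e \<in> {1..L}"
  shows "psi L D (\<lambda>l d. if l = e then k d else 0) X =
         psi L D (\<lambda>_ _. 0) X * exp (dotp D k (X e) - sqnorm D k / 2)"
proof -
  have "psi L D (\<lambda>l d. if l = e then k d else 0) X =
      (\<Prod>l\<in>{1..L}. \<Prod>d\<in>{1..D}. normal_density 0 1 (X l d) *
          exp ((if l = e then k d else 0) * X l d - (if l = e then k d else 0)\<^sup>2 / 2))"
    unfolding psi_def by (subst nd_shift) (rule refl)
  also have "\<dots> = psi L D (\<lambda>_ _. 0) X *
      exp (\<Sum>l\<in>{1..L}. \<Sum>d\<in>{1..D}. (if l = e then k d else 0) * X l d - (if l = e then k d else 0)\<^sup>2 / 2)"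
    unfolding psi_def by (simp add: prod.distrib exp_sum)
  also have "(\<Sum>l\<in>{1..L}. \<Sum>d\<in>{1..D}. (if l = e then k d else 0) * X l d - (if l = e then k d else 0)\<^sup>2 / 2)
      = (\<Sum>d\<in>{1..D}. k d * X e d - (k d)\<^sup>2 / 2)"
  proof -
    have "(\<Sum>d\<in>{1..D}. (if l = e then k d else 0) * X l d - (if l = e then k d else 0)\<^sup>2 / 2) =
          (if l = e then (\<Sum>d\<in>{1..D}. k d * X e d - (k d)\<^sup>2 / 2) else 0)" for l
      by auto
    then show ?thesis using e by (simp add: sum.delta)
  qed
  also have "\<dots> = dotp D k (X e) - sqnorm D k / 2"
    unfolding dotp_def sqnorm_def by (simp add: sum_subtractf sum_divide_distrib)
  finally show ?thesis .
qed

lemma sqnorm_khat: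
  assumes orth: "\<forall>f\<in>{1..F}. \<forall>f'\<in>{1..F}. dotp D (kstar f) (kstar f') = (if f = f' then 1 else 0)"
  shows "sqnorm D (khat F kstar th) = sqnorm F th"
proof -
  have "sqnorm D (khat F kstar th) = (\<Sum>d\<in>{1..D}. \<Sum>f\<in>{1..F}. \<Sum>f'\<in>{1..F}. th f * th f' * (kstar f d * kstar f' d))"
    unfolding sqnorm_def khat_def power2_eq_square
    by (simp add: sum_product algebra_simps)
  also have "\<dots> = (\<Sum>f\<in>{1..F}. \<Sum>f'\<in>{1..F}. th f * th f' * dotp D (kstar f) (kstar f'))"
    unfolding dotp_def by (simp add: sum_distrib_left) (subst sum.swap, rule sum.cong, simp, subst sum.swap, simp)
  also have "\<dots> = (\<Sum>f\<in>{1..F}. th f * th f)"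
  proof (rule sum.cong[OF refl])
    fix f assume f: "f \<in> {1..F}"
    have "(\<Sum>f'\<in>{1..F}. th f * th f' * dotp D (kstar f) (kstar f')) = (\<Sum>f'\<in>{1..F}. if f = f' then th f * th f else 0)"
      using orth f by (intro sum.cong) auto
    also have "\<dots> = th f * th f" using f by (simp add: sum.delta)
    finally show "(\<Sum>f'\<in>{1..F}. th f * th f' * dotp D (kstar f) (kstar f')) = th f * th f" .
  qed
  finally show ?thesis unfolding sqnorm_def by (simp add: power2_eq_square)
qed

lemma coord_meas[measurable]: "(\<lambda>X. X i d) \<in> borel_measurable (obs_space L D)"
proof (cases "i \<in> {1..L}")
  case True
  note i = True
  show ?thesis
  proof (cases "d \<in> {1..D}")
    case True
    show ?thesis unfolding obs_space_def
      by (rule measurable_compose[OF measurable_component_singleton[OF i] measurable_component_singleton[OF True]])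
  next
    case False
    have "X i d = undefined" if "X \<in> space (obs_space L D)" for X
      using that i False by (auto simp: obs_space_def space_PiM PiE_iff extensional_def)
    then have "(\<lambda>X. X i d) \<in> borel_measurable (obs_space L D) \<longleftrightarrow> (\<lambda>X. undefined :: real) \<in> borel_measurable (obs_space L D)"
      by (intro measurable_cong) auto
    then show ?thesis by simp
  qed
next
  case False
  have "(\<lambda>X. X i d) \<in> borel_measurable (obs_space L D) \<longleftrightarrow> (\<lambda>X. (undefined :: nat \<Rightarrow> real) d) \<in> borel_measurable (obs_space L D)"
    by (rule measurable_cong) (use False in \<open>auto simp: obs_space_def space_PiM PiE_iff extensional_def\<close>)
  then show ?thesis by simp
qed

lemma softmax_meas[measurable]: "(\<lambda>X. bayes_softmax L D H kk b X d) \<in> borel_measurable (obs_space L D)"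
  unfolding bayes_softmax_def dotp_def by measurable

lemma softmax_bound: "\<bar>bayes_softmax L D H kk b X d\<bar> \<le> (\<Sum>l\<in>{1..L}. \<bar>X l d\<bar>)"
proof -
  define N where "N l = (\<Sum>h=1..H. exp (dotp D (kk h) (X l) + b h))" for l
  define Z where "Z = (\<Sum>l'=1..L. N l')"
  have N0: "0 \<le> N l" for l unfolding N_def by (intro sum_nonneg) auto
  have NZ: "N l \<le> Z" if "l \<in> {1..L}" for l
    unfolding Z_def using that N0 by (intro member_le_sum) auto
  have w: "0 \<le> N l / Z \<and> N l / Z \<le> 1" if "l \<in> {1..L}" for l
    using NZ[OF that] N0[of l] by (cases "Z = 0") (auto simp: divide_le_eq_1)
  have "bayes_softmax L D H kk b X d = (\<Sum>l\<in>{1..L}. N l / Z * X l d)"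
    unfolding bayes_softmax_def N_def Z_def by simp
  also have "\<bar>\<dots>\<bar> \<le> (\<Sum>l\<in>{1..L}. \<bar>N l / Z * X l d\<bar>)" by (rule sum_abs)
  also have "\<dots> \<le> (\<Sum>l\<in>{1..L}. \<bar>X l d\<bar>)"
  proof (rule sum_mono)
    fix l assume l: "l \<in> {1..L}"
    have "\<bar>N l / Z * X l d\<bar> = (N l / Z) * \<bar>X l d\<bar>" using w[OF l] by (simp only: abs_mult abs_of_nonneg)
    also have "\<dots> \<le> 1 * \<bar>X l d\<bar>" using w[OF l] by (intro mult_right_mono) auto
    finally show "\<bar>N l / Z * X l d\<bar> \<le> \<bar>X l d\<bar>" by simp
  qed
  finally show ?thesis .
qed

lemma pointwise_sum:
  fixes G :: "nat \<Rightarrow> real"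
  assumes L1: "L \<ge> 1"
    and orth: "\<forall>f\<in>{1..F}. \<forall>f'\<in>{1..F}. dotp D (kstar f) (kstar f') = (if f = f' then 1 else 0)"
    and inj: "inj_on theta {1..H}"
    and support: "set_pmf P = theta ` {1..H}"
  shows "(\<Sum>x\<in>set_pmf (pair_pmf (pmf_of_set {1..L}) P). pmf (pair_pmf (pmf_of_set {1..L}) P) x *
            (psi L D (\<lambda>l d. if l = fst x then khat F kstar (snd x) d else 0) X * G (fst x)))
     = psi L D (\<lambda>_ _. 0) X / L * (\<Sum>e\<in>{1..L}. (\<Sum>h=1..H. exp (dotp D (khat F kstar (theta h)) (X e) +
              (- sqnorm F (theta h) / 2 + ln (pmf P (theta h))))) * G e)"
proof -
  let ?pp = "pair_pmf (pmf_of_set {1..L}) P"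
  let ?t = "\<lambda>x. pmf ?pp x * (psi L D (\<lambda>l d. if l = fst x then khat F kstar (snd x) d else 0) X * G (fst x))"
  have ne: "{1..L} \<noteq> {}" using L1 by auto
  have set: "set_pmf ?pp = {1..L} \<times> theta ` {1..H}"
    using ne support by simp
  have "(\<Sum>x\<in>set_pmf ?pp. ?t x) = (\<Sum>e\<in>{1..L}. \<Sum>th\<in>theta ` {1..H}. ?t (e, th))"
    unfolding set by (subst sum.cartesian_product) (simp add: case_prod_beta cong: if_cong)
  also have "\<dots> = (\<Sum>e\<in>{1..L}. \<Sum>h\<in>{1..H}. ?t (e, theta h))"
    by (intro sum.cong refl) (simp add: sum.reindex[OF inj])
  also have "\<dots> = (\<Sum>e\<in>{1..L}. \<Sum>h\<in>{1..H}. psi L D (\<lambda>_ _. 0) X / L *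
      (exp (dotp D (khat F kstar (theta h)) (X e) + (- sqnorm F (theta h) / 2 + ln (pmf P (theta h)))) * G e))"
  proof (intro sum.cong refl)
    fix e h assume e: "e \<in> {1..L}" and h: "h \<in> {1..H}"
    have pos: "0 < pmf P (theta h)"
      using h support by (metis image_eqI pmf_positive)
    have pm: "pmf ?pp (e, theta h) = pmf P (theta h) / L"
      using e by (simp add: pmf_pair)
    have ps: "psi L D (\<lambda>l d. if l = e then khat F kstar (theta h) d else 0) X =
        psi L D (\<lambda>_ _. 0) X * exp (dotp D (khat F kstar (theta h)) (X e) - sqnorm F (theta h) / 2)"
      using psi_shift[OF e] sqnorm_khat[OF orth] by simp
    have ex: "exp (dotp D (khat F kstar (theta h)) (X e) + (- sqnorm F (theta h) / 2 + ln (pmf P (theta h))))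
        = exp (dotp D (khat F kstar (theta h)) (X e) - sqnorm F (theta h) / 2) * pmf P (theta h)"
    proof -
      have "dotp D (khat F kstar (theta h)) (X e) + (- sqnorm F (theta h) / 2 + ln (pmf P (theta h))) =
          (dotp D (khat F kstar (theta h)) (X e) - sqnorm F (theta h) / 2) + ln (pmf P (theta h))" by simp
      then show ?thesis using pos by (simp only: exp_add exp_ln)
    qed
    show "?t (e, theta h) = psi L D (\<lambda>_ _. 0) X / L *
      (exp (dotp D (khat F kstar (theta h)) (X e) + (- sqnorm F (theta h) / 2 + ln (pmf P (theta h)))) * G e)"
    proof -
      have "?t (e, theta h) = pmf ?pp (e, theta h) * (psi L D (\<lambda>l d. if l = e then khat F kstar (theta h) d else 0) X * G e)"
        by (simp only: fst_conv snd_conv)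
      also have "\<dots> = pmf P (theta h) / L * (psi L D (\<lambda>_ _. 0) X * exp (dotp D (khat F kstar (theta h)) (X e) - sqnorm F (theta h) / 2) * G e)"
        by (simp only: pm ps)
      finally show ?thesis unfolding ex by (simp add: field_simps)
    qed
  qed
  also have "\<dots> = psi L D (\<lambda>_ _. 0) X / L * (\<Sum>e\<in>{1..L}. (\<Sum>h=1..H. exp (dotp D (khat F kstar (theta h)) (X e) +
              (- sqnorm F (theta h) / 2 + ln (pmf P (theta h))))) * G e)"
    by (simp add: sum_distrib_left sum_distrib_right)
  finally show ?thesis .
qed

lemma softmax_times:
  assumes L1: "L \<ge> 1" and H1: "H \<ge> 1"
  shows "(\<Sum>e\<in>{1..L}. (\<Sum>h=1..H. exp (dotp D (kk h) (X e) + b h)) * (c * bayes_softmax L D H kk b X d))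
       = (\<Sum>e\<in>{1..L}. (\<Sum>h=1..H. exp (dotp D (kk h) (X e) + b h)) * (c * X e d))"
proof -
  define N where "N l = (\<Sum>h=1..H. exp (dotp D (kk h) (X l) + b h))" for l
  define Z where "Z = (\<Sum>l'=1..L. N l')"
  have Npos: "0 < N l" for l unfolding N_def using H1 by (intro sum_pos) auto
  have Zpos: "0 < Z" unfolding Z_def using L1 Npos by (intro sum_pos) auto
  have S: "bayes_softmax L D H kk b X d = (\<Sum>l\<in>{1..L}. N l / Z * X l d)"
    unfolding bayes_softmax_def N_def Z_def by simp
  have "(\<Sum>e\<in>{1..L}. N e * (c * bayes_softmax L D H kk b X d)) = c * bayes_softmax L D H kk b X d * Z"
    unfolding Z_def by (simp add: sum_distrib_left sum_distrib_right mult_ac)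
  also have "\<dots> = c * (\<Sum>l\<in>{1..L}. N l * X l d)"
    unfolding S using Zpos by (simp add: sum_distrib_right sum_distrib_left)
  also have "\<dots> = (\<Sum>e\<in>{1..L}. N e * (c * X e d))"
    by (simp add: sum_distrib_left mult_ac)
  finally show ?thesis unfolding N_def .
qed

lemma psi_nonneg: "0 \<le> psi L D m X"
  by (simp add: psi_def prod_nonneg)

theorem proposition6:
  fixes L F D H :: nat
    and kstar :: "nat \<Rightarrow> nat \<Rightarrow> real"
    and P :: "(nat \<Rightarrow> real) pmf"
    and theta :: "nat \<Rightarrow> (nat \<Rightarrow> real)"
  assumes "L \<ge> 1" and "F \<ge> 1" and "D \<ge> 1" and "H \<ge> 1"
    and orthonormal: "\<forall>f\<in>{1..F}. \<forall>f'\<in>{1..F}.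
                        dotp D (kstar f) (kstar f') = (if f = f' then 1 else 0)"
    and theta_in_RF: "\<forall>h\<in>{1..H}. \<forall>f. f \<notin> {1..F} \<longrightarrow> theta h f = 0"
    and theta_distinct: "inj_on theta {1..H}"
    and support: "set_pmf P = theta ` {1..H}"
  shows
    "(let M = data_model L F D kstar P;
          kk = (\<lambda>h. khat F kstar (theta h));
          b = (\<lambda>h. - sqnorm F (theta h) / 2 + ln (pmf P (theta h)))
      in (\<integral>\<omega>. (\<Sum>d=1..D. (snd \<omega> (fst \<omega>) d - bayes_softmax L D H kk b (snd \<omega>) d)\<^sup>2) \<partial>M)
         = (\<integral>\<omega>. (\<Sum>d=1..D. (snd \<omega> (fst \<omega>) d
                 - real_cond_exp M (sigma_X L D M) (\<lambda>\<omega>'. snd \<omega>' (fst \<omega>') d) \<omega>)\<^sup>2) \<partial>M))"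
proof -
  note L1 = assms(1) and H1 = assms(4)
  let ?kk = "\<lambda>h. khat F kstar (theta h)"
  let ?b = "\<lambda>h. - sqnorm F (theta h) / 2 + ln (pmf P (theta h))"
  let ?S = "\<lambda>X d. bayes_softmax L D H ?kk ?b X d"
  define pp where "pp = pair_pmf (pmf_of_set {1..L}) P"
  define N :: "(nat \<times> (nat \<Rightarrow> nat \<Rightarrow> real)) measure" where "N = (count_space UNIV \<Otimes>\<^sub>M obs_space L D)"
  define mu :: "nat \<Rightarrow> (nat \<Rightarrow> real) \<Rightarrow> nat \<Rightarrow> nat \<Rightarrow> real" where "mu = (\<lambda>e th. (\<lambda>l d. if l = e then khat F kstar th d else (0::real)))"
  define K where "K = (\<lambda>(e, th). distr (obs_law L F D kstar e th) N (\<lambda>X. (e, X)))"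
  define M where "M = data_model L F D kstar P"
  have M_eq: "M = measure_pmf pp \<bind> K"
    unfolding M_def data_model_def pp_def K_def N_def by simp
  have obs_gauss: "obs_law L F D kstar e th = gauss L D (mu e th)" for e th
    unfolding obs_law_def gauss_def mu_def by simp
  have mpair: "(\<lambda>X. (e, X)) \<in> gauss L D m \<rightarrow>\<^sub>M N" for e m
    unfolding N_def by (intro measurable_Pair measurable_const measurable_ident_sets sets_gauss) auto
  have K_space: "K x \<in> space (prob_algebra N)" for x
  proof -
    obtain e th where x: "x = (e, th)" by (cases x)
    have "prob_space (K x)" unfolding x K_def obs_gauss
      using prob_space.prob_space_distr[OF prob_space_gauss mpair] by simp
    then show ?thesis unfolding space_prob_algebra x K_def by simp
  qed
  have ne: "{1..L} \<noteq> {}" using L1 by auto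
  have setpp: "set_pmf pp = {1..L} \<times> theta ` {1..H}"
    unfolding pp_def using ne support by simp
  have fin: "finite (set_pmf pp)" unfolding setpp by simp
  have sK: "sets (K x) = sets N" for x using K_space[of x] by (simp add: space_prob_algebra)
  have psK: "prob_space (K x)" for x using K_space[of x] by (simp add: space_prob_algebra)
  have sets_M: "sets M = sets N" unfolding M_eq by (rule sets_bind) (auto simp: sK)
  have space_M: "space M = space N" using sets_M by (rule sets_eq_imp_space_eq)
  have ps_M: "prob_space M"
    unfolding M_eq
    by (rule prob_space_bind'[where A="measure_pmf pp" and M="measure_pmf pp" and B=K and N=N])
       (auto simp: space_prob_algebra measure_pmf.prob_space_axioms sK psK)
  have fst_meas: "fst \<in> N \<rightarrow>\<^sub>M count_space UNIV" unfolding N_def by (rule measurable_fst)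
  have snd_meas: "snd \<in> N \<rightarrow>\<^sub>M obs_space L D" unfolding N_def by (rule measurable_snd)
  have hmeas: "(\<lambda>\<omega>. h (fst \<omega>) (snd \<omega>)) \<in> borel_measurable N"
    if "\<And>e. h e \<in> borel_measurable (obs_space L D)" for h :: "nat \<Rightarrow> (nat \<Rightarrow> nat \<Rightarrow> real) \<Rightarrow> real"
    by (rule measurable_compose_countable[where f="\<lambda>i \<omega>. h i (snd \<omega>)" and g=fst, OF _ fst_meas])
       (rule measurable_compose[OF snd_meas that])
  have LamM: "f \<in> borel_measurable (Lam L D) \<longleftrightarrow> f \<in> borel_measurable (obs_space L D)" for f :: "_ \<Rightarrow> real"
    by (simp only: measurable_cong_sets[OF sets_Lam refl])
  have gaussM: "f \<in> borel_measurable (gauss L D m) \<longleftrightarrow> f \<in> borel_measurable (obs_space L D)" for f :: "_ \<Rightarrow> real" and m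
    by (simp only: measurable_cong_sets[OF sets_gauss refl])
  have psi_meas: "psi L D m \<in> borel_measurable (obs_space L D)" for m
    unfolding psi_def by measurable

  have int_M: "integrable M (\<lambda>\<omega>. h (fst \<omega>) (snd \<omega>)) \<and>
      (\<forall>x\<in>set_pmf pp. integrable (Lam L D) (\<lambda>X. psi L D (mu (fst x) (snd x)) X * h (fst x) X)) \<and>
      (\<integral>\<omega>. h (fst \<omega>) (snd \<omega>) \<partial>M) = (\<Sum>x\<in>set_pmf pp. pmf pp x * (\<integral>X. psi L D (mu (fst x) (snd x)) X * h (fst x) X \<partial>Lam L D))"
    if hm: "\<And>e. h e \<in> borel_measurable (obs_space L D)"
    and hi: "\<And>x. x \<in> set_pmf pp \<Longrightarrow> integrable (gauss L D (mu (fst x) (snd x))) (h (fst x))"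
    for h :: "nat \<Rightarrow> (nat \<Rightarrow> nat \<Rightarrow> real) \<Rightarrow> real"
  proof -
    have gm: "(\<lambda>\<omega>. h (fst \<omega>) (snd \<omega>)) \<in> borel_measurable N" by (rule hmeas[OF hm])
    have Kx: "K x = distr (gauss L D (mu (fst x) (snd x))) N (\<lambda>X. (fst x, X))" for x
      by (cases x) (simp add: K_def obs_gauss)
    have intK: "integrable (K x) (\<lambda>\<omega>. h (fst \<omega>) (snd \<omega>)) \<longleftrightarrow> integrable (gauss L D (mu (fst x) (snd x))) (h (fst x))" for x
      unfolding Kx by (subst integrable_distr_eq[OF mpair gm]) simp
    have integK: "(\<integral>\<omega>. h (fst \<omega>) (snd \<omega>) \<partial>K x) = (\<integral>X. h (fst x) X \<partial>gauss L D (mu (fst x) (snd x)))" for x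
      unfolding Kx by (subst integral_distr[OF mpair gm]) simp
    have hLam: "h e \<in> borel_measurable (Lam L D)" for e using hm LamM by blast
    have psiLam: "psi L D m \<in> borel_measurable (Lam L D)" for m using psi_meas LamM by blast
    have dens: "integrable (gauss L D m) (h e) \<longleftrightarrow> integrable (Lam L D) (\<lambda>X. psi L D m X * h e X)" for m e
      unfolding gauss_density by (subst integrable_density[OF hLam psiLam]) (auto simp: psi_nonneg)
    have densI: "(\<integral>X. h e X \<partial>gauss L D m) = (\<integral>X. psi L D m X * h e X \<partial>Lam L D)" for m e
      unfolding gauss_density by (subst integral_density[OF hLam psiLam]) (auto simp: psi_nonneg)
    have iK: "\<And>x. x \<in> set_pmf pp \<Longrightarrow> integrable (K x) (\<lambda>\<omega>. h (fst \<omega>) (snd \<omega>))"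
      using hi intK by blast
    note B = bind_pmf_finite_integral[OF fin K_space gm iK]
    show ?thesis
      using B hi dens unfolding M_eq by (auto simp: integK densI)
  qed

  have sum_int: "(\<Sum>x\<in>set_pmf pp. pmf pp x * (\<integral>X. \<phi> x X \<partial>Lam L D)) = (\<integral>X. (\<Sum>x\<in>set_pmf pp. pmf pp x * \<phi> x X) \<partial>Lam L D)"
    if "\<And>x. x \<in> set_pmf pp \<Longrightarrow> integrable (Lam L D) (\<phi> x)" for \<phi> :: "nat \<times> (nat \<Rightarrow> real) \<Rightarrow> (nat \<Rightarrow> nat \<Rightarrow> real) \<Rightarrow> real"
  proof -
    have "(\<integral>X. (\<Sum>x\<in>set_pmf pp. pmf pp x * \<phi> x X) \<partial>Lam L D) = (\<Sum>x\<in>set_pmf pp. (\<integral>X. pmf pp x * \<phi> x X \<partial>Lam L D))"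
      by (rule Bochner_Integration.integral_sum[where f="\<lambda>x X. pmf pp x * \<phi> x X"]) (simp add: that)
    then show ?thesis by simp
  qed

  have snd_M: "snd \<in> M \<rightarrow>\<^sub>M obs_space L D"
    by (subst measurable_cong_sets[OF sets_M refl]) (rule snd_meas)
  have snd_space: "snd \<in> space M \<rightarrow> space (obs_space L D)"
    using measurable_space[OF snd_M] by blast
  have sets_F: "sets (sigma_X L D M) = {snd -` B \<inter> space M | B. B \<in> sets (obs_space L D)}"
    unfolding sigma_X_def by (rule sets_vimage_algebra2[OF snd_space])
  have subalg: "subalgebra M (sigma_X L D M)"
  proof -
    have "space (sigma_X L D M) = space M" unfolding sigma_X_def by simp
    moreover have "sets (sigma_X L D M) \<subseteq> sets M"
      unfolding sets_F using measurable_sets[OF snd_M] by blast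
    ultimately show ?thesis unfolding subalgebra_def by blast
  qed
  interpret PM: prob_space M by (rule ps_M)
  interpret fms: finite_measure_subalgebra M "sigma_X L D M"
    by (simp add: finite_measure_subalgebra_def finite_measure_subalgebra_axioms_def subalg PM.finite_measure_axioms)

  have eset: "fst x \<in> {1..L}" if "x \<in> set_pmf pp" for x using that setpp by auto

  have ae: "AE \<omega> in M. real_cond_exp M (sigma_X L D M) (\<lambda>\<omega>'. snd \<omega>' (fst \<omega>') d) \<omega> = ?S (snd \<omega>) d"
    if d: "d \<in> {1..D}" for d
  proof (rule fms.real_cond_exp_charact)
    have intf: "integrable (gauss L D m) (\<lambda>X. X e d)" if "e \<in> {1..L}" for m e
      using integrable_gauss_coord[OF that d] .
    have ints: "integrable (gauss L D m) (\<lambda>X. ?S X d)" for m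
    proof (rule Bochner_Integration.integrable_bound)
      show "integrable (gauss L D m) (\<lambda>X. \<Sum>l\<in>{1..L}. \<bar>X l d\<bar>)"
        using integrable_gauss_coord[OF _ d] by (intro Bochner_Integration.integrable_sum integrable_abs) auto
      show "(\<lambda>X. ?S X d) \<in> borel_measurable (gauss L D m)"
        using softmax_meas gaussM by blast
      show "AE X in gauss L D m. norm (?S X d) \<le> norm (\<Sum>l\<in>{1..L}. \<bar>X l d\<bar>)"
        by (intro AE_I2) (simp only: real_norm_def abs_sum_abs softmax_bound)
    qed
    show "integrable M (\<lambda>\<omega>. snd \<omega> (fst \<omega>) d)"
      using int_M[of "\<lambda>e X. X e d", OF coord_meas intf[OF eset]] by (rule conjunct1)
    show "integrable M (\<lambda>\<omega>. ?S (snd \<omega>) d)"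
      using int_M[of "\<lambda>e X. ?S X d", OF softmax_meas ints] by (rule conjunct1)
    show "(\<lambda>\<omega>. ?S (snd \<omega>) d) \<in> borel_measurable (sigma_X L D M)"
      unfolding sigma_X_def by (rule measurable_compose[OF measurable_vimage_algebra1[OF snd_space] softmax_meas])
    fix A assume "A \<in> sets (sigma_X L D M)"
    then obtain B where B[measurable]: "B \<in> sets (obs_space L D)" and A: "A = snd -` B \<inter> space M"
      unfolding sets_F by blast
    have BG: "B \<in> sets (gauss L D m)" for m using B sets_gauss by blast
    have intf': "integrable (gauss L D m) (\<lambda>X. indicator B X * X e d)" if "e \<in> {1..L}" for m e
      using integrable_mult_indicator[OF BG intf[OF that]] by (simp only: real_scaleR_def)
    have ints': "integrable (gauss L D m) (\<lambda>X. indicator B X * ?S X d)" for m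
      using integrable_mult_indicator[OF BG ints] by (simp only: real_scaleR_def)
    have hmB: "(\<lambda>X. indicator B X * X e d) \<in> borel_measurable (obs_space L D)" for e
      by measurable
    have hmS: "(\<lambda>X. indicator B X * ?S X d) \<in> borel_measurable (obs_space L D)" for e
      by (intro borel_measurable_times borel_measurable_indicator B softmax_meas)
    have c1: "integrable M (\<lambda>\<omega>. indicator B (snd \<omega>) * snd \<omega> (fst \<omega>) d) \<and>
      (\<forall>x\<in>set_pmf pp. integrable (Lam L D) (\<lambda>X. psi L D (mu (fst x) (snd x)) X * (indicator B X * X (fst x) d))) \<and>
      (\<integral>\<omega>. indicator B (snd \<omega>) * snd \<omega> (fst \<omega>) d \<partial>M) = (\<Sum>x\<in>set_pmf pp. pmf pp x * (\<integral>X. psi L D (mu (fst x) (snd x)) X * (indicator B X * X (fst x) d) \<partial>Lam L D))"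
      by (rule int_M[of "\<lambda>e X. indicator B X * X e d", OF hmB intf'[OF eset]])
    have c2: "integrable M (\<lambda>\<omega>. indicator B (snd \<omega>) * ?S (snd \<omega>) d) \<and>
      (\<forall>x\<in>set_pmf pp. integrable (Lam L D) (\<lambda>X. psi L D (mu (fst x) (snd x)) X * (indicator B X * ?S X d))) \<and>
      (\<integral>\<omega>. indicator B (snd \<omega>) * ?S (snd \<omega>) d \<partial>M) = (\<Sum>x\<in>set_pmf pp. pmf pp x * (\<integral>X. psi L D (mu (fst x) (snd x)) X * (indicator B X * ?S X d) \<partial>Lam L D))"
      by (rule int_M[of "\<lambda>e X. indicator B X * ?S X d", OF hmS ints'])
    have pw: "(\<Sum>x\<in>set_pmf pp. pmf pp x * (psi L D (mu (fst x) (snd x)) X * (indicator B X * X (fst x) d))) =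
              (\<Sum>x\<in>set_pmf pp. pmf pp x * (psi L D (mu (fst x) (snd x)) X * (indicator B X * ?S X d)))" for X
    proof -
      have "(\<Sum>x\<in>set_pmf pp. pmf pp x * (psi L D (mu (fst x) (snd x)) X * (indicator B X * X (fst x) d))) =
          psi L D (\<lambda>_ _. 0) X / L * (\<Sum>e\<in>{1..L}. (\<Sum>h=1..H. exp (dotp D (khat F kstar (theta h)) (X e) +
              (- sqnorm F (theta h) / 2 + ln (pmf P (theta h))))) * (indicator B X * X e d))"
        unfolding pp_def mu_def by (rule pointwise_sum[OF L1 orthonormal theta_distinct support])
      also have "\<dots> = psi L D (\<lambda>_ _. 0) X / L * (\<Sum>e\<in>{1..L}. (\<Sum>h=1..H. exp (dotp D (khat F kstar (theta h)) (X e) +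
              (- sqnorm F (theta h) / 2 + ln (pmf P (theta h))))) * (indicator B X * ?S X d))"
        by (simp only: softmax_times[OF L1 H1, of D ?kk X ?b "indicator B X" d])
      also have "\<dots> = (\<Sum>x\<in>set_pmf pp. pmf pp x * (psi L D (mu (fst x) (snd x)) X * (indicator B X * ?S X d)))"
        unfolding pp_def mu_def by (rule pointwise_sum[OF L1 orthonormal theta_distinct support, symmetric])
      finally show ?thesis .
    qed
    have indA: "indicator A \<omega> = indicator B (snd \<omega>)" if "\<omega> \<in> space M" for \<omega>
      unfolding A indicator_def using that by auto
    have "(\<integral>\<omega>\<in>A. snd \<omega> (fst \<omega>) d \<partial>M) = (\<integral>\<omega>. indicator B (snd \<omega>) * snd \<omega> (fst \<omega>) d \<partial>M)"
      unfolding set_lebesgue_integral_def by (intro Bochner_Integration.integral_cong refl) (simp only: real_scaleR_def indA)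
    also have "\<dots> = (\<Sum>x\<in>set_pmf pp. pmf pp x * (\<integral>X. psi L D (mu (fst x) (snd x)) X * (indicator B X * X (fst x) d) \<partial>Lam L D))"
      using c1 by (rule conjunct2[THEN conjunct2])
    also have "\<dots> = (\<integral>X. (\<Sum>x\<in>set_pmf pp. pmf pp x * (psi L D (mu (fst x) (snd x)) X * (indicator B X * X (fst x) d))) \<partial>Lam L D)"
      by (rule sum_int) (use c1 in blast)
    also have "\<dots> = (\<integral>X. (\<Sum>x\<in>set_pmf pp. pmf pp x * (psi L D (mu (fst x) (snd x)) X * (indicator B X * ?S X d))) \<partial>Lam L D)"
      by (simp only: pw)
    also have "\<dots> = (\<Sum>x\<in>set_pmf pp. pmf pp x * (\<integral>X. psi L D (mu (fst x) (snd x)) X * (indicator B X * ?S X d) \<partial>Lam L D))"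
      by (rule sum_int[symmetric]) (use c2 in blast)
    also have "\<dots> = (\<integral>\<omega>. indicator B (snd \<omega>) * ?S (snd \<omega>) d \<partial>M)"
      using c2[THEN conjunct2, THEN conjunct2] by (rule sym)
    also have "\<dots> = (\<integral>\<omega>\<in>A. ?S (snd \<omega>) d \<partial>M)"
      unfolding set_lebesgue_integral_def by (intro Bochner_Integration.integral_cong refl) (simp only: real_scaleR_def indA)
    finally show "(\<integral>\<omega>\<in>A. snd \<omega> (fst \<omega>) d \<partial>M) = (\<integral>\<omega>\<in>A. ?S (snd \<omega>) d \<partial>M)" .
  qed

  have AEall: "AE \<omega> in M. \<forall>d\<in>{1..D}. real_cond_exp M (sigma_X L D M) (\<lambda>\<omega>'. snd \<omega>' (fst \<omega>') d) \<omega> = ?S (snd \<omega>) d"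
    by (rule eventually_ball_finite[OF finite_atLeastAtMost]) (blast intro: ae)
  have fM[measurable]: "(\<lambda>\<omega>. snd \<omega> (fst \<omega>) d) \<in> borel_measurable M" for d
    by (subst measurable_cong_sets[OF sets_M refl]) (rule hmeas, rule coord_meas)
  have gM[measurable]: "(\<lambda>\<omega>. ?S (snd \<omega>) d) \<in> borel_measurable M" for d
    by (subst measurable_cong_sets[OF sets_M refl]) (rule hmeas, rule softmax_meas)
  have main: "(\<integral>\<omega>. (\<Sum>d=1..D. (snd \<omega> (fst \<omega>) d - ?S (snd \<omega>) d)\<^sup>2) \<partial>M)
         = (\<integral>\<omega>. (\<Sum>d=1..D. (snd \<omega> (fst \<omega>) d
                 - real_cond_exp M (sigma_X L D M) (\<lambda>\<omega>'. snd \<omega>' (fst \<omega>') d) \<omega>)\<^sup>2) \<partial>M)"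
  proof (rule integral_cong_AE)
    show "(\<lambda>\<omega>. \<Sum>d = 1..D. (snd \<omega> (fst \<omega>) d - ?S (snd \<omega>) d)\<^sup>2) \<in> borel_measurable M"
      by (intro borel_measurable_sum borel_measurable_power borel_measurable_diff fM gM)
    show "(\<lambda>\<omega>. \<Sum>d = 1..D. (snd \<omega> (fst \<omega>) d - real_cond_exp M (sigma_X L D M) (\<lambda>\<omega>'. snd \<omega>' (fst \<omega>') d) \<omega>)\<^sup>2) \<in> borel_measurable M"
      by (intro borel_measurable_sum borel_measurable_power borel_measurable_diff fM borel_measurable_cond_exp2)
    show "AE \<omega> in M. (\<Sum>d = 1..D. (snd \<omega> (fst \<omega>) d - ?S (snd \<omega>) d)\<^sup>2) =
        (\<Sum>d = 1..D. (snd \<omega> (fst \<omega>) d - real_cond_exp M (sigma_X L D M) (\<lambda>\<omega>'. snd \<omega>' (fst \<omega>') d) \<omega>)\<^sup>2)"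
    proof (rule eventually_mono[OF AEall])
      fix \<omega> assume a: "\<forall>d\<in>{1..D}. real_cond_exp M (sigma_X L D M) (\<lambda>\<omega>'. snd \<omega>' (fst \<omega>') d) \<omega> = ?S (snd \<omega>) d"
      show "(\<Sum>d = 1..D. (snd \<omega> (fst \<omega>) d - ?S (snd \<omega>) d)\<^sup>2) =
        (\<Sum>d = 1..D. (snd \<omega> (fst \<omega>) d - real_cond_exp M (sigma_X L D M) (\<lambda>\<omega>'. snd \<omega>' (fst \<omega>') d) \<omega>)\<^sup>2)"
      proof (rule sum.cong[OF refl])
        fix d assume "d \<in> {1..D}"
        then show "(snd \<omega> (fst \<omega>) d - ?S (snd \<omega>) d)\<^sup>2 =
          (snd \<omega> (fst \<omega>) d - real_cond_exp M (sigma_X L D M) (\<lambda>\<omega>'. snd \<omega>' (fst \<omega>') d) \<omega>)\<^sup>2"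
          using a by (simp only: ball_simps)
      qed
    qed
  qed
  show ?thesis unfolding Let_def using main[unfolded M_def] .
qed

end
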